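(* Let $T=\mathrm{diag}(t_1,t_2,t_3)$ with $|t_1|=|t_2|=s>0$ and $s_3:=|t_3|>0$, and put $u=s_3/s$. Then the condition $2\pi N_T|\det T|=1$ holds if and only if \[ s_3=\begin{cases}\left[1+\dfrac{\arctan\big(\sqrt{u^{-2}-1}\big)}{u^2\sqrt{u^{-2}-1}}\right]^{-1}, & u<1,\\[2ex] \tfrac12, & u=1,\\[1ex] \left[1-\dfrac{\sqrt{1-u^{-2}}}{2(u^2-1)}\ln\dfrac{\big|1-\sqrt{1-u^{-2}}\big|}{1+\sqrt{1-u^{-2}}}\right]^{-1}, & u>1.\end{cases} \]
   Context: $N_T$ is defined by $N_T^{-1}=\int_{S^2}(\boldsymbol n^\intercal T^{-2}\boldsymbol n)^{-2}\,\mathrm{d}^2\boldsymbol n$, where $S^2$ is the unit sphere in $\mathbb{R}^3$ with its standard surface measure. *)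

theory Defs
  imports "HOL-Analysis.Analysis"
begin

text \<open>Integral over the unit sphere S^2 with respect to its standard surface measure,
  written via the standard spherical-coordinate parametrisation
  n(theta,phi) = (sin theta cos phi, sin theta sin phi, cos theta), with area element
  sin theta dtheta dphi, theta in [0,pi], phi in [0,2 pi].\<close>
definition sphere_pt :: "real \<Rightarrow> real \<Rightarrow> real^3" where
  "sphere_pt \<theta> \<phi> = vector [sin \<theta> * cos \<phi>, sin \<theta> * sin \<phi>, cos \<theta>]"

definition sphere_integral :: "(real^3 \<Rightarrow> real) \<Rightarrow> real" where
  "sphere_integral f =
     (LINT p : {0..pi} \<times> {0..2*pi} | lborel. f (sphere_pt (fst p) (snd p)) * sin (fst p))"

definition N_T :: "real^3^3 \<Rightarrow> real" where
  "N_T T = inverse (sphere_integral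
              (\<lambda>n. inverse ((n \<bullet> (matrix_inv (T ** T) *v n)) ^ 2)))"

definition diag3 :: "real \<Rightarrow> real \<Rightarrow> real \<Rightarrow> real^3^3" where
  "diag3 a b c = (\<chi> i j. if i = j then (vector [a, b, c] :: real^3) $ i else 0)"

end

theory Submission
  imports Defs
begin


lemma matrix_inv_eqI:
  fixes A B :: "'a::comm_ring_1^'n^'n"
  assumes "A ** B = mat 1" "B ** A = mat 1"
  shows "matrix_inv A = B"
  unfolding matrix_inv_def
proof (rule some_equality)
  show "A ** B = mat 1 \<and> B ** A = mat 1" using assms by simp
next
  fix C assume "A ** C = mat 1 \<and> C ** A = mat 1"
  then have "C = C ** (A ** B)" "(C ** A) ** B = B" using assms by (simp_all add: matrix_mul_rid matrix_mul_lid)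
  then show "C = B" by (simp add: matrix_mul_assoc)
qed

lemma diag3_mul: "diag3 a b c ** diag3 d e f = diag3 (a*d) (b*e) (c*f)"
  unfolding diag3_def matrix_matrix_mult_def
  by (simp add: vec_eq_iff forall_3 sum_3)

lemma diag3_one: "diag3 1 1 1 = mat 1"
  unfolding diag3_def mat_def by (simp add: vec_eq_iff forall_3)

lemma det_diag3: "det (diag3 a b c) = a*b*c"
  unfolding det_3 diag3_def by simp

lemma quad_diag3: "x \<bullet> (diag3 a b c *v x) = a * (x$1)^2 + b*(x$2)^2 + c*(x$3)^2"
  unfolding diag3_def matrix_vector_mult_def inner_vec_def
  by (simp add: sum_3 power2_eq_square)

lemma sphere_pt_comp: "sphere_pt t p $ 1 = sin t * cos p" "sphere_pt t p $ 2 = sin t * sin p" "sphere_pt t p $ 3 = cos t"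
  unfolding sphere_pt_def by simp_all


lemma ftc_cos:
  fixes H h :: "real \<Rightarrow> real"
  assumes "\<And>x. -1 \<le> x \<Longrightarrow> x \<le> 1 \<Longrightarrow> (H has_real_derivative h x) (at x)"
  shows "((\<lambda>t. sin t * h (cos t)) has_integral (H 1 - H (-1))) {0..pi}"
proof -
  have "((\<lambda>t. sin t * h (cos t)) has_integral ((\<lambda>t. - H (cos t)) pi - (\<lambda>t. - H (cos t)) 0)) {0..pi}"
  proof (rule fundamental_theorem_of_calculus)
    fix t assume "t \<in> {0..pi}"
    have "((\<lambda>t. H (cos t)) has_real_derivative (h (cos t) * (- sin t))) (at t)"
      by (rule DERIV_chain2[of H]) (auto intro!: assms derivative_eq_intros)
    then have "((\<lambda>t. - H (cos t)) has_real_derivative (- (h (cos t) * (- sin t)))) (at t)"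
      by (rule DERIV_minus)
    then show "((\<lambda>t. - H (cos t)) has_vector_derivative sin t * h (cos t)) (at t within {0..pi})"
      unfolding has_real_derivative_iff_has_vector_derivative
      by (auto simp: mult.commute intro: has_vector_derivative_at_within)
  qed simp
  then show ?thesis by simp
qed

lemma H1: assumes r: "r > 0" shows "((\<lambda>x. x / (2*(1+r^2*x^2)) + arctan (r*x) / (2*r)) has_real_derivative 1 / (1 + r^2*x^2)^2) (at x)"
proof -
  have p: "1 + r^2*x^2 > 0" by (simp add: add_pos_nonneg)
  have q: "(r*x)^2 = r^2*x^2" by (simp add: power_mult_distrib)
  show ?thesis
  apply (rule DERIV_cong)
  apply (intro derivative_eq_intros refl)
  using p r unfolding q apply (simp_all)
  apply (simp add: divide_simps)
  apply (simp add: algebra_simps power2_eq_square)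
  done
qed
lemma H2: assumes r: "r > 0" "r < 1" and x: "\<bar>x\<bar> \<le> 1" shows "((\<lambda>x. x / (2*(1-r^2*x^2)) + ln ((1+r*x)/(1-r*x)) / (4*r)) has_real_derivative 1 / (1 - r^2*x^2)^2) (at x)"
proof -
  have rx: "\<bar>r*x\<bar> < 1" proof -
    have "r*\<bar>x\<bar> \<le> r*1" using r x by (intro mult_left_mono) auto
    moreover have "\<bar>r*x\<bar> = r*\<bar>x\<bar>" using r by (simp add: abs_mult)
    ultimately show ?thesis using r by linarith
  qed
  have a: "1 + r*x > 0" "1 - r*x > 0" using rx by auto
  have q: "r^2*x^2 = (r*x)^2" by (simp add: power_mult_distrib)
  have "1 - (r*x)^2 = (1+r*x)*(1-r*x)" by (simp add: power2_eq_square algebra_simps)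
  then have p: "1 - (r*x)^2 > 0" using a by simp
  show ?thesis
  apply (rule DERIV_cong)
  apply (intro derivative_eq_intros refl)
  using p r a unfolding q apply (simp_all)
  apply (simp add: divide_simps)
  apply algebra
  done
qed

definition Jk :: "real \<Rightarrow> real" where
  "Jk k = (if k > 0 then 1/(1+k) + arctan (sqrt k) / sqrt k else if k = 0 then 2
           else 1/(1+k) + ln ((1 + sqrt (-k)) / (1 - sqrt (-k))) / (2 * sqrt (-k)))"

lemma Jk_integral:
  assumes "k > -1"
  shows "((\<lambda>t. sin t * (1 / (1 + k * (cos t)^2)^2)) has_integral Jk k) {0..pi}"
proof -
  consider "k > 0" | "k = 0" | "k < 0" by linarith
  then show ?thesis
  proof cases
    case 1
    define r where "r = sqrt k"
    have r: "r > 0" "r^2 = k" using 1 by (auto simp: r_def)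
    define H where "H x = x / (2*(1+r^2*x^2)) + arctan (r*x) / (2*r)" for x
    have "(H has_real_derivative 1 / (1 + k*x^2)^2) (at x)" for x
      unfolding H_def r(2)[symmetric] using H1[OF r(1)] by simp
    from ftc_cos[of H, OF this] have "((\<lambda>t. sin t * (1 / (1 + k * (cos t)^2)^2)) has_integral H 1 - H (-1)) {0..pi}" .
    moreover have "H 1 - H (-1) = Jk k"
    proof -
      have h1: "H 1 = 1/(2*(1+k)) + arctan r/(2*r)" using r by (simp add: H_def)
      have hm: "H (-1) = - H 1" by (simp add: H_def arctan_minus)
      have "H 1 - H (-1) = 2 * H 1" using hm by simp
      also have "\<dots> = 1/(1+k) + arctan r / r"
      proof -
        have "r*(1+k) > 0" using 1 r by simp
        then have "r + k*r \<noteq> 0" "1 + k \<noteq> 0" "r \<noteq> 0" using 1 r by (auto simp: algebra_simps)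
        then show ?thesis unfolding h1 by (simp add: field_simps)
      qed
      finally show ?thesis using 1 by (simp add: Jk_def r_def)
    qed
    ultimately show ?thesis by simp
  next
    case 2
    have "((\<lambda>t. sin t * (1 / (1 + k * (cos t)^2)^2)) has_integral (\<lambda>x. x) 1 - (\<lambda>x. x) (-1)) {0..pi}"
      by (rule ftc_cos) (auto simp: 2 intro!: derivative_eq_intros)
    then show ?thesis by (simp add: Jk_def 2)
  next
    case 3
    define r where "r = sqrt (-k)"
    have r: "r > 0" "r^2 = -k" "r < 1" using 3 assms real_sqrt_less_iff[of "-k" 1] by (auto simp: r_def)
    have k: "k = -(r^2)" using r by simp
    define H where "H x = x / (2*(1-r^2*x^2)) + ln ((1+r*x)/(1-r*x)) / (4*r)" for x
    have "(H has_real_derivative 1 / (1 + k*x^2)^2) (at x)" if x: "-1 \<le> x" "x \<le> 1" for x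
      unfolding H_def k using H2[OF r(1) r(3), of x] x by simp
    from ftc_cos[of H, OF this] have "((\<lambda>t. sin t * (1 / (1 + k * (cos t)^2)^2)) has_integral H 1 - H (-1)) {0..pi}" by blast
    moreover have "H 1 - H (-1) = Jk k"
    proof -
      have h1: "H 1 = 1/(2*(1+k)) + ln ((1+r)/(1-r))/(4*r)" using r by (simp add: H_def k)
      have "ln ((1-r)/(1+r)) = - ln ((1+r)/(1-r))" using r by (simp add: ln_div)
      then have hm: "H (-1) = - H 1" by (simp add: H_def)
      have "H 1 - H (-1) = 2 * H 1" using hm by simp
      also have "\<dots> = 1/(1+k) + ln ((1+r)/(1-r)) / (2*r)"
      proof -
        have "1 + k \<noteq> 0" "2 + 2*k \<noteq> 0" using assms by simp_all
        then show ?thesis unfolding h1 using r by (simp add: distrib_left divide_simps)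
      qed
      finally show ?thesis using 3 by (simp add: Jk_def r_def)
    qed
    ultimately show ?thesis by simp
  qed
qed


lemma sphere_int_g:
  fixes g :: "real \<Rightarrow> real"
  assumes "continuous_on {0..pi} g"
  shows "(LINT p : {0..pi} \<times> {0..2*pi} | lborel. g (fst p)) = 2*pi * integral {0..pi} g"
proof -
  have C: "{0..pi} \<times> {0..2*pi} = cbox (0::real,0::real) (pi,2*pi)" by (simp add: cbox_Pair_eq)
  have cont: "continuous_on (cbox (0::real,0::real) (pi,2*pi)) (\<lambda>p. g (fst p))"
    by (rule continuous_on_compose2[OF assms]) (auto intro: continuous_intros simp: cbox_Pair_eq)
  have "set_integrable lborel (cbox (0::real,0::real) (pi,2*pi)) (\<lambda>p. g (fst p))"
    unfolding set_integrable_def by (rule borel_integrable_compact[OF compact_cbox cont])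
  then have "(LINT p : {0..pi} \<times> {0..2*pi} | lborel. g (fst p)) = integral (cbox (0::real,0::real) (pi,2*pi)) (\<lambda>p. g (fst p))"
    unfolding C by (rule set_borel_integral_eq_integral)
  also have "\<dots> = integral (cbox 0 pi) (\<lambda>x. integral (cbox 0 (2*pi)) (\<lambda>y. g x))"
    using integral_prod_continuous[OF cont] by simp
  also have "\<dots> = integral {0..pi} (\<lambda>x. 2*pi * g x)" by simp
  also have "\<dots> = 2*pi * integral {0..pi} g" by simp
  finally show ?thesis .
qed


lemma NT_value:
  fixes t1 t2 t3 s :: real
  assumes "\<bar>t1\<bar> = s" and "\<bar>t2\<bar> = s" and "s > 0" and "\<bar>t3\<bar> > 0"
  defines "k \<equiv> s^2 / t3^2 - 1"
  shows "sphere_integral (\<lambda>n. inverse ((n \<bullet> (matrix_inv (diag3 t1 t2 t3 ** diag3 t1 t2 t3) *v n)) ^ 2))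
         = 2*pi * (s^4 * Jk k)"
proof -
  have t1: "t1^2 = s^2" "t2^2 = s^2" using assms(1,2) by (metis power2_abs)+
  have nz: "t1 \<noteq> 0" "t2 \<noteq> 0" "t3 \<noteq> 0" using assms by auto
  have inv: "matrix_inv (diag3 t1 t2 t3 ** diag3 t1 t2 t3) = diag3 (1/t1^2) (1/t2^2) (1/t3^2)"
    by (rule matrix_inv_eqI) (simp_all add: diag3_mul nz power2_eq_square diag3_one[symmetric])
  have kpos: "k > -1" unfolding k_def using assms by (simp add: divide_pos_pos)
  have den: "1 + k * (cos x)^2 > 0" for x
  proof (cases "k \<ge> 0")
    case True then show ?thesis by (simp add: add_pos_nonneg)
  next
    case False
    have "(cos x)^2 \<le> 1" by (simp add: abs_square_le_1)
    then have "k * (cos x)^2 \<ge> k" using False by (smt (verit) mult_le_cancel_left1)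
    then show ?thesis using kpos by linarith
  qed
  define g where "g x = s^4 * (sin x * (1 / (1 + k * (cos x)^2)^2))" for x
  have pt: "inverse ((sphere_pt a b \<bullet> (matrix_inv (diag3 t1 t2 t3 ** diag3 t1 t2 t3) *v sphere_pt a b)) ^ 2) * sin a = g a" for a b
  proof -
    have "sphere_pt a b \<bullet> (matrix_inv (diag3 t1 t2 t3 ** diag3 t1 t2 t3) *v sphere_pt a b)
        = (sin a)^2 / s^2 + (cos a)^2 / t3^2"
    proof -
      have aux: "c*(x*y)^2 + c*(x*z)^2 = c*x^2*(y^2+z^2)" for c x y z :: real
        by (simp add: algebra_simps power2_eq_square)
      show ?thesis
        unfolding inv quad_diag3 sphere_pt_comp t1 using aux[of "1/s^2" "sin a" "cos b" "sin b"] by simp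
    qed
    also have "\<dots> = (1 + k * (cos a)^2) / s^2"
      unfolding k_def using assms nz by (simp add: field_simps sin_squared_eq)
    finally have Q: "sphere_pt a b \<bullet> (matrix_inv (diag3 t1 t2 t3 ** diag3 t1 t2 t3) *v sphere_pt a b) = (1 + k * (cos a)^2) / s^2" .
    have "inverse (((1 + k*(cos a)^2)/s^2)^2) * sin a = g a"
      unfolding g_def using assms(3) den[of a] by (simp add: power_divide field_simps)
    then show ?thesis unfolding Q .
  qed
  have "sphere_integral (\<lambda>n. inverse ((n \<bullet> (matrix_inv (diag3 t1 t2 t3 ** diag3 t1 t2 t3) *v n)) ^ 2))
      = (LINT p : {0..pi} \<times> {0..2*pi} | lborel. g (fst p))"
    unfolding sphere_integral_def pt by simp
  also have "\<dots> = 2*pi * integral {0..pi} g"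
  proof (rule sphere_int_g)
    show "continuous_on {0..pi} g" unfolding g_def
      using den by (intro continuous_intros) (metis less_irrefl power_not_zero)
  qed
  also have "integral {0..pi} g = s^4 * Jk k"
    unfolding g_def by (rule integral_unique, rule has_integral_mult_right, rule Jk_integral[OF kpos])
  finally show ?thesis .
qed


lemma Jk_pos: assumes "k > -1" shows "Jk k > 0"
proof -
  consider "k > 0" | "k = 0" | "k < 0" by linarith
  then show ?thesis
  proof cases
    case 1 then show ?thesis by (simp add: Jk_def add_pos_pos)
  next
    case 2 then show ?thesis by (simp add: Jk_def)
  next
    case 3
    define m where "m = sqrt (-k)"
    have m: "m > 0" "m < 1" using 3 assms real_sqrt_less_iff[of "-k" 1] by (auto simp: m_def)
    have "(1+m)/(1-m) > 1" using m by (simp add: field_simps)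
    then have a: "ln ((1+m)/(1-m)) / (2*m) > 0" using m by simp
    have b: "1/(1+k) > 0" using assms by simp
    show ?thesis using 3 add_pos_pos[OF b a] by (simp add: Jk_def m_def[symmetric])
  qed
qed

theorem mainTheorem4:
  fixes t1 t2 t3 s :: real
  assumes "\<bar>t1\<bar> = s" and "\<bar>t2\<bar> = s" and "s > 0" and "\<bar>t3\<bar> > 0"
  shows "(let T = diag3 t1 t2 t3; s3 = \<bar>t3\<bar>; u = s3 / s in
          2 * pi * N_T T * \<bar>det T\<bar> = 1 \<longleftrightarrow>
          s3 = (if u < 1 then
                  inverse (1 + arctan (sqrt (inverse (u^2) - 1)) / (u^2 * sqrt (inverse (u^2) - 1)))
                else if u = 1 then 1/2
                else inverse (1 - sqrt (1 - inverse (u^2)) / (2 * (u^2 - 1))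
                        * ln (\<bar>1 - sqrt (1 - inverse (u^2))\<bar> / (1 + sqrt (1 - inverse (u^2)))))))"
proof -
  define s3 where "s3 = \<bar>t3\<bar>"
  define u where "u = s3 / s"
  define k where "k = s^2 / t3^2 - 1"
  have s3: "s3 > 0" "t3^2 = s3^2" using assms by (auto simp: s3_def)
  have u: "u > 0" using s3 assms by (simp add: u_def)
  have ku: "k = inverse (u^2) - 1" unfolding k_def u_def s3(2) by (simp add: power_divide field_simps)
  have k1: "k > -1" using u ku by simp
  have u2: "u^2 = 1/(1+k)" using ku u by (simp add: divide_inverse)
  define J where "J = Jk k"
  have J: "J > 0" using Jk_pos[OF k1] by (simp add: J_def)
  have NT: "N_T (diag3 t1 t2 t3) = inverse (2*pi*(s^4 * J))"
    unfolding N_T_def NT_value[OF assms] J_def k_def ..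
  have det: "\<bar>det (diag3 t1 t2 t3)\<bar> = s^2 * s3"
    using assms unfolding det_diag3 s3_def by (simp add: abs_mult power2_eq_square)
  have "2 * pi * N_T (diag3 t1 t2 t3) * \<bar>det (diag3 t1 t2 t3)\<bar> = 1 \<longleftrightarrow> s3 = u^2 / J"
  proof -
    have "2 * pi * N_T (diag3 t1 t2 t3) * \<bar>det (diag3 t1 t2 t3)\<bar> = s3 / (s^2 * J)"
      unfolding NT det using assms(3) J by (simp add: field_simps power2_eq_square power4_eq_xxxx)
    also have "\<dots> = 1 \<longleftrightarrow> s3 = u^2 / J"
      unfolding u_def using assms(3) J s3 by (auto simp: field_simps power2_eq_square)
    finally show ?thesis .
  qed
  moreover have "u^2 / J = (if u < 1 then
                  inverse (1 + arctan (sqrt (inverse (u^2) - 1)) / (u^2 * sqrt (inverse (u^2) - 1)))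
                else if u = 1 then 1/2
                else inverse (1 - sqrt (1 - inverse (u^2)) / (2 * (u^2 - 1))
                        * ln (\<bar>1 - sqrt (1 - inverse (u^2))\<bar> / (1 + sqrt (1 - inverse (u^2))))))"
  proof -
    consider "u < 1" | "u = 1" | "u > 1" by linarith
    then show ?thesis
    proof cases
      case 1
      have "u^2 < 1" using 1 u by (simp add: power_less_one_iff)
      then have kp: "k > 0" using ku u by (simp add: one_less_inverse_iff)
      define r where "r = sqrt k"
      have r: "r > 0" using kp by (simp add: r_def)
      have Jeq: "J = u^2 + arctan r / r" unfolding J_def Jk_def r_def using kp u2 by simp
      have "arctan r > 0" using r by (simp add: zero_less_arctan_iff)
      then have "arctan r + r * u^2 > 0" "arctan r / r + u^2 > 0" using r u by (simp_all add: add_pos_pos)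
      then have "u^2 / J = inverse (1 + arctan r / (u^2 * r))"
        unfolding Jeq using u r by (simp add: field_simps)
      then show ?thesis using 1 by (simp add: ku[symmetric] r_def)
    next
      case 2
      then have "k = 0" using ku by simp
      then show ?thesis using 2 by (simp add: J_def Jk_def)
    next
      case 3
      have "u^2 > 1" using 3 u by (simp add: one_less_power)
      then have kn: "k < 0" using ku u by (simp add: inverse_less_1_iff)
      define m where "m = sqrt (-k)"
      have m: "m > 0" "m < 1" using kn k1 real_sqrt_less_iff[of "-k" 1] by (auto simp: m_def)
      have mk: "1 - inverse (u^2) = -k" using ku by simp
      have m2: "m^2 = -k" using kn by (simp add: m_def)
      define L where "L = ln ((1+m)/(1-m))"
      have L: "ln (\<bar>1 - m\<bar> / (1 + m)) = - L" unfolding L_def using m by (simp add: ln_div)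
      have um: "u^2 - 1 = u^2 * m^2" using m2 ku u by (simp add: field_simps)
      have Jeq: "J = u^2 + L / (2*m)" unfolding J_def Jk_def L_def m_def using kn u2 by simp
      have "u^2 + L/(2*m) > 0" using J Jeq by simp
      then have "u^2 / J = inverse (1 - m / (2 * (u^2 - 1)) * (- L))"
        unfolding um Jeq using u m by (simp add: field_simps power2_eq_square)
      then show ?thesis using 3 unfolding mk m_def[symmetric] L by simp
    qed
  qed
  ultimately show ?thesis unfolding Let_def s3_def[symmetric] u_def[symmetric] by simp
qed

end
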